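(* Let $p<1/2$, $c(p)=\big|\log\frac{1-p}{p}\big|^{-1}$, and $c>c(p)$. Then $$\mu_p^{\mathcal{U}_0}\big(x: D(x)>c\log t\big)=o(1/t)\quad\text{as }t\to\infty.$$
   Context: Configurations are subsets of $\mathbb{Z}$ (occupied sites). $O$ is the configuration with every negative site occupied and every non-negative site empty; $\mathcal{U}_0$ is the set of configurations in which the number of particles in $[0,\infty)$ is finite and equal to the number of holes in $(-\infty,0)$. For $x\in\mathcal{U}_0$, $D(x)=\sum_{k\ge1}B^{(k)}(x)$, where $B^{(k)}(x)$ is the position of the $k$-th rightmost particle of $x$ plus $k$ (equivalently, the minimal number of nearest-neighbour particle jumps to empty sites needed to go from $O$ to $x$). For $p\in(0,1/2)$, $\mu_p$ is the product measure on configurations under which site $i\in\mathbb{Z}$ is occupied independently with probability $\big(1+\big(\tfrac{1-p}{p}\big)^i\big)^{-1}$; $\mathcal{U}_0$ has positive $\mu_p$-probability and $\mu_p^{\mathcal{U}_0}=\mu_p(\cdot\mid\mathcal{U}_0)$. *)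

theory Defs
  imports "HOL-Probability.Probability" "HOL-Library.Landau_Symbols"
begin

text \<open>A configuration is a function int => bool; site i is occupied iff x i.\<close>
type_synonym config = "int \<Rightarrow> bool"

definition O_config :: config where
  "O_config = (\<lambda>i. i < 0)"

definition U0 :: "config set" where
  "U0 = {x. finite {i. 0 \<le> i \<and> x i} \<and> finite {i. i < 0 \<and> \<not> x i} \<and>
            card {i. 0 \<le> i \<and> x i} = card {i. i < 0 \<and> \<not> x i}}"

fun kth_rightmost :: "config \<Rightarrow> nat \<Rightarrow> int" where
  "kth_rightmost x 0 = undefined"
| "kth_rightmost x (Suc 0) = (GREATEST i. x i)"
| "kth_rightmost x (Suc (Suc k)) = (GREATEST i. x i \<and> i < kth_rightmost x (Suc k))"

definition B :: "config \<Rightarrow> nat \<Rightarrow> int" where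
  "B x k = kth_rightmost x k + int k"

definition D :: "config \<Rightarrow> real" where
  "D x = (\<Sum>k. real_of_int (B x (Suc k)))"

definition occ_prob :: "real \<Rightarrow> int \<Rightarrow> real" where
  "occ_prob p i = 1 / (1 + ((1 - p) / p) powi i)"

definition mu :: "real \<Rightarrow> config measure" where
  "mu p = PiM (UNIV :: int set) (\<lambda>i. measure_pmf (bernoulli_pmf (occ_prob p i)))"

definition mu_U0 :: "real \<Rightarrow> config set \<Rightarrow> real" where
  "mu_U0 p A = measure (mu p) (A \<inter> U0) / measure (mu p) U0"

definition cp :: "real \<Rightarrow> real" where
  "cp p = 1 / \<bar>ln ((1 - p) / p)\<bar>"

end

theory Submission
  imports Defs
begin


definition ee :: "int \<Rightarrow> bool \<Rightarrow> nat" where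
  "ee i b = (if 0 \<le> i then (if b then nat i else 0) else (if b then 0 else nat (-i)))"

lemma int_max_exists:
  fixes P :: "int \<Rightarrow> bool"
  assumes "P z" "\<And>i. P i \<Longrightarrow> i \<le> b"
  shows "\<exists>m. P m \<and> (\<forall>i. P i \<longrightarrow> i \<le> m)"
proof -
  let ?S = "{i. P i \<and> z \<le> i}"
  have fin: "finite ?S" by (rule finite_subset[of _ "{z..b}"]) (auto simp: assms)
  have ne: "z \<in> ?S" using assms by auto
  show ?thesis
  proof (intro exI conjI allI impI)
    show "P (Max ?S)" using Max_in[OF fin] ne by auto
    fix i assume "P i"
    show "i \<le> Max ?S"
    proof (cases "z \<le> i")
      case True thus ?thesis using Max_ge[OF fin] \<open>P i\<close> by auto
    next
      case False thus ?thesis using Max_ge[OF fin ne] by auto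
    qed
  qed
qed

lemma gr_below:
  fixes x :: config
  assumes low: "\<And>i. i < -int N \<Longrightarrow> x i"
  shows "x (GREATEST i. x i \<and> i < a) \<and> (GREATEST i. x i \<and> i < a) < a
     \<and> (\<forall>i. x i \<and> i < a \<longrightarrow> i \<le> (GREATEST i. x i \<and> i < a))"
proof -
  have "x (min a (-int N) - 1) \<and> min a (-int N) - 1 < a" using low by auto
  then obtain m where m: "x m \<and> m < a" "\<forall>i. x i \<and> i < a \<longrightarrow> i \<le> m"
    using int_max_exists[of "\<lambda>i. x i \<and> i < a" _ a] by fastforce
  have "(GREATEST i. x i \<and> i < a) = m"
    by (rule Greatest_equality) (use m in auto)
  thus ?thesis using m by auto
qed

lemma gr_top:
  fixes x :: config
  assumes low: "\<And>i. i < -int N \<Longrightarrow> x i" and up: "\<And>i. int N \<le> i \<Longrightarrow> \<not> x i"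
  shows "x (GREATEST i. x i) \<and> (\<forall>i. x i \<longrightarrow> i \<le> (GREATEST i. x i))"
proof -
  have "x (-int N - 1)" using low by auto
  moreover have "\<And>i. x i \<Longrightarrow> i \<le> int N" using up by (meson linorder_not_le order_less_imp_le)
  ultimately obtain m where m: "x m" "\<forall>i. x i \<longrightarrow> i \<le> m"
    using int_max_exists[of x] by blast
  have "(GREATEST i. x i) = m"
    by (rule Greatest_equality) (use m in auto)
  thus ?thesis using m by auto
qed

lemma D_window:
  fixes x :: config and N :: nat
  assumes low: "\<And>i. i < -int N \<Longrightarrow> x i" and up: "\<And>i. int N \<le> i \<Longrightarrow> \<not> x i"
    and bal: "card {i. 0 \<le> i \<and> x i} = card {i. i < 0 \<and> \<not> x i}"
  shows "D x = real (\<Sum>i\<in>{-int N..<int N}. ee i (x i))"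
proof -
  define y where "y = (\<lambda>k. kth_rightmost x (Suc k))"
  have fin_up: "finite {i. j \<le> i \<and> x i}" for j
    by (rule finite_subset[of _ "{j..<int N}"]) (auto dest: up simp: not_le[symmetric])
  define S where "S = {i. -int N \<le> i \<and> x i}"
  have finS: "finite S" unfolding S_def by (rule fin_up)
  have cardS: "card S = N"
  proof -
    have P: "{i. 0 \<le> i \<and> x i} = {i\<in>{0..<int N}. x i}" using up by (auto simp: not_le[symmetric])
    have R: "{i. i < 0 \<and> \<not> x i} = {i\<in>{-int N..<0}. \<not> x i}" using low by (auto simp: not_le[symmetric])
    have S': "S = {i\<in>{0..<int N}. x i} \<union> {i\<in>{-int N..<0}. x i}"
      unfolding S_def using up by (auto simp: not_le[symmetric])
    have "card S = card {i\<in>{0..<int N}. x i} + card {i\<in>{-int N..<0}. x i}"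
      unfolding S' by (rule card_Un_disjoint) ((rule finite_subset[OF _ finite_atLeastLessThan_int], blast)+, auto)
    moreover have "card {i\<in>{-int N..<0}. x i} + card {i\<in>{-int N..<0}. \<not> x i} = N"
    proof -
      have "card {i\<in>{-int N..<0}. x i} + card {i\<in>{-int N..<0}. \<not> x i}
          = card ({i\<in>{-int N..<0}. x i} \<union> {i\<in>{-int N..<0}. \<not> x i})"
        by (rule card_Un_disjoint[symmetric]) ((rule finite_subset[OF _ finite_atLeastLessThan_int], blast)+, auto)
      also have "{i\<in>{-int N..<0}. x i} \<union> {i\<in>{-int N..<0}. \<not> x i} = {-int N..<0}" by auto
      finally show ?thesis by simp
    qed
    ultimately show ?thesis using bal P R by simp
  qed
  have Q: "x (y k) \<and> card {i. y k \<le> i \<and> x i} = Suc k" for k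
  proof (induction k)
    case 0
    have "y 0 = (GREATEST i. x i)" by (simp add: y_def)
    with gr_top[where x=x and N=N, OF low up] have g: "x (y 0)" "\<forall>i. x i \<longrightarrow> i \<le> y 0" by auto
    hence "{i. y 0 \<le> i \<and> x i} = {y 0}" by force
    thus ?case using g by simp
  next
    case (Suc k)
    have ye: "y (Suc k) = (GREATEST i. x i \<and> i < y k)" by (simp add: y_def)
    with gr_below[where x=x and N=N, OF low, of "y k"] have g: "x (y (Suc k))" "y (Suc k) < y k"
       "\<forall>i. x i \<and> i < y k \<longrightarrow> i \<le> y (Suc k)" by auto
    hence "{i. y (Suc k) \<le> i \<and> x i} = insert (y (Suc k)) {i. y k \<le> i \<and> x i}" by force
    moreover have "y (Suc k) \<notin> {i. y k \<le> i \<and> x i}" using g by auto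
    ultimately show ?case using Suc.IH g fin_up by simp
  qed
  have dec: "y (Suc k) < y k" for k
    using gr_below[where x=x and N=N, OF low, of "y k"] by (simp add: y_def)
  have lowk: "-int N \<le> y k" if "k < N" for k
  proof (rule ccontr)
    assume "\<not> ?thesis"
    hence "insert (y k) S \<subseteq> {i. y k \<le> i \<and> x i}" "y k \<notin> S" using Q[of k] by (auto simp: S_def)
    hence "card (insert (y k) S) \<le> Suc k" using card_mono[OF fin_up] Q[of k] by metis
    thus False using \<open>y k \<notin> S\<close> finS cardS that by simp
  qed
  have highk: "y k = - int (Suc k)" if "N \<le> k" for k
  proof -
    have "y k < -int N"
    proof (rule ccontr)
      assume "\<not> ?thesis"
      hence "{i. y k \<le> i \<and> x i} \<subseteq> S" by (auto simp: S_def)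
      hence "card {i. y k \<le> i \<and> x i} \<le> N" using card_mono[OF finS] cardS by metis
      thus False using Q[of k] that by simp
    qed
    hence "{i. y k \<le> i \<and> x i} = {y k..< -int N} \<union> S" using low by (auto simp: S_def)
    moreover have "card ({y k..< -int N} \<union> S) = nat (-int N - y k) + N"
      using cardS finS by (subst card_Un_disjoint) (auto simp: S_def)
    ultimately have "nat (-int N - y k) + N = Suc k" using Q[of k] by simp
    thus ?thesis using \<open>y k < -int N\<close> by linarith
  qed
  have Bz: "B x (Suc k) = 0" if "k \<notin> {..<N}" for k
    using highk[of k] that by (simp add: B_def y_def)
  have "D x = (\<Sum>k<N. real_of_int (B x (Suc k)))"
    unfolding D_def by (rule suminf_finite) (use Bz in auto)
  also have "\<dots> = real_of_int (\<Sum>k<N. y k + (int k + 1))"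
    by (auto simp: B_def y_def intro!: sum.cong)
  finally have D1: "D x = real_of_int ((\<Sum>k<N. y k) + (\<Sum>k<N. int k + 1))"
    by (simp add: sum.distrib)
  have inj: "inj_on y {..<N}"
  proof -
    have "strict_mono (\<lambda>k. - y k)" by (rule strict_monoI_Suc) (use dec in auto)
    hence "inj (\<lambda>k. - y k)" by (rule strict_mono_imp_inj_on)
    thus ?thesis by (auto simp: inj_on_def)
  qed
  have img: "y ` {..<N} = S"
  proof (rule card_subset_eq[OF finS])
    show "y ` {..<N} \<subseteq> S" using Q lowk by (auto simp: S_def)
    show "card (y ` {..<N}) = card S" using card_image[OF inj] cardS by simp
  qed
  have sy: "(\<Sum>k<N. y k) = (\<Sum>i\<in>S. i)"
    using sum.reindex[OF inj, of id] img by simp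
  have negsum: "(\<Sum>i\<in>{-int n..<0}. i) = - (\<Sum>k<n. int k + 1)" for n
  proof (induction n)
    case 0 thus ?case by simp
  next
    case (Suc n)
    have "{-int (Suc n)..<0} = insert (-int (Suc n)) {-int n..<0}" by auto
    thus ?case using Suc by simp
  qed
  have split: "{-int N..<int N} = {-int N..<0} \<union> {0..<int N}" by auto
  have sS: "(\<Sum>i\<in>S. i) = (\<Sum>i\<in>{-int N..<0}. if x i then i else 0) + (\<Sum>i\<in>{0..<int N}. if x i then i else 0)"
  proof -
    have "S = {i\<in>{-int N..<int N}. x i}" using up by (auto simp: S_def not_le[symmetric])
    hence "(\<Sum>i\<in>S. i) = (\<Sum>i\<in>{-int N..<int N}. if x i then i else 0)"
      using sum.inter_filter[of "{-int N..<int N}" "\<lambda>i. i" x] by simp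
    also have "\<dots> = (\<Sum>i\<in>{-int N..<0}. if x i then i else 0) + (\<Sum>i\<in>{0..<int N}. if x i then i else 0)"
      unfolding split by (rule sum.union_disjoint) auto
    finally show ?thesis .
  qed
  have se: "int (\<Sum>i\<in>{-int N..<int N}. ee i (x i)) = (\<Sum>i\<in>{-int N..<0}. if x i then 0 else -i) + (\<Sum>i\<in>{0..<int N}. if x i then i else 0)"
  proof -
    have "int (\<Sum>i\<in>{-int N..<int N}. ee i (x i)) = (\<Sum>i\<in>{-int N..<int N}. int (ee i (x i)))" by simp
    also have "\<dots> = (\<Sum>i\<in>{-int N..<0}. int (ee i (x i))) + (\<Sum>i\<in>{0..<int N}. int (ee i (x i)))"
      unfolding split by (rule sum.union_disjoint) auto
    also have "(\<Sum>i\<in>{-int N..<0}. int (ee i (x i))) = (\<Sum>i\<in>{-int N..<0}. if x i then 0 else -i)"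
      by (rule sum.cong) (auto simp: ee_def)
    also have "(\<Sum>i\<in>{0..<int N}. int (ee i (x i))) = (\<Sum>i\<in>{0..<int N}. if x i then i else 0)"
      by (rule sum.cong) (auto simp: ee_def)
    finally show ?thesis .
  qed
  have key: "(\<Sum>i\<in>{-int N..<0}. if x i then i else 0) + (\<Sum>k<N. int k + 1) = (\<Sum>i\<in>{-int N..<0}. if x i then 0 else -i)"
  proof -
    have "(\<Sum>i\<in>{-int N..<0}. if x i then i else 0) - (\<Sum>i\<in>{-int N..<0}. if x i then 0 else -i) = (\<Sum>i\<in>{-int N..<0}. i)"
      by (subst sum_subtractf[symmetric]) (rule sum.cong, auto)
    thus ?thesis using negsum[of N] by linarith
  qed
  show ?thesis unfolding D1 sy sS
    using se key by (metis (no_types, lifting) add.commute add.left_commute of_int_of_nat_eq)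
qed



lemma site_bound:
  fixes p :: real and i :: int and b :: bool
  assumes p: "0 < p" "p < 1/2"
  shows "pmf (bernoulli_pmf (occ_prob p i)) b \<le> (p / (1 - p)) ^ ee i b"
proof -
  define r where "r = (1 - p) / p"
  have r1: "r > 1" using p by (simp add: r_def field_simps)
  have inv: "p / (1 - p) = inverse r" using p by (simp add: r_def)
  have rpos: "0 < r powi i" using r1 by simp
  have q01: "0 \<le> occ_prob p i" "occ_prob p i \<le> 1"
    using rpos by (auto simp: occ_prob_def r_def[symmetric] field_simps)
  show ?thesis
  proof (cases "0 \<le> i")
    case True
    have ri: "r powi i = r ^ nat i" using True by (simp add: power_int_def)
    show ?thesis
    proof (cases b)
      case True
      have "occ_prob p i = 1 / (1 + r ^ nat i)" by (simp add: occ_prob_def r_def[symmetric] ri)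
      also have "\<dots> \<le> 1 / r ^ nat i" proof (rule divide_left_mono)
        have "0 < r ^ nat i" using r1 by simp
        thus "0 < (1 + r ^ nat i) * r ^ nat i" by (simp add: add_pos_pos)
      qed auto
      also have "\<dots> = inverse r ^ nat i" by (simp add: power_inverse divide_inverse)
      finally show ?thesis using True \<open>0 \<le> i\<close> q01 by (simp add: ee_def inv)
    next
      case False thus ?thesis using \<open>0 \<le> i\<close> q01 by (simp add: ee_def)
    qed
  next
    case False
    have ri: "r powi i = inverse r ^ nat (-i)" using False by (simp add: power_int_def)
    show ?thesis
    proof (cases b)
      case True thus ?thesis using False q01 by (simp add: ee_def)
    next
      case bF: False
      have "1 - occ_prob p i = r powi i / (1 + r powi i)"
        using rpos by (simp add: occ_prob_def r_def[symmetric] field_simps)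
      also have "\<dots> \<le> r powi i" using rpos by (simp add: field_simps)
      finally show ?thesis using bF False q01 by (simp add: ee_def inv ri)
    qed
  qed
qed

lemma geo_sym:
  fixes m :: real
  assumes "0 \<le> m" "m < 1"
  shows "(\<Sum>i\<in>{-int N..<int N}. m ^ nat \<bar>i\<bar>) \<le> 2 / (1 - m)"
proof -
  have eq: "(\<Sum>i\<in>{-int n..<int n}. m ^ nat \<bar>i\<bar>) = (\<Sum>k<n. m ^ k + m ^ Suc k)" for n
  proof (induction n)
    case 0 thus ?case by simp
  next
    case (Suc n)
    have "{-int (Suc n)..<int (Suc n)} = insert (-int (Suc n)) (insert (int n) {-int n..<int n})" by auto
    moreover have "nat (int n + 1) = Suc n" by simp
    ultimately show ?case using Suc by (simp del: of_nat_Suc)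
  qed
  have g: "(\<Sum>k<n. m ^ k) \<le> 1 / (1 - m)" for n
  proof -
    have "(\<Sum>k<n. m ^ k) = (1 - m ^ n) / (1 - m)" using assms by (simp add: sum_gp_strict)
    also have "\<dots> \<le> 1 / (1 - m)" using assms by (intro divide_right_mono) auto
    finally show ?thesis .
  qed
  have "(\<Sum>k<N. m ^ Suc k) = m * (\<Sum>k<N. m ^ k)" by (simp add: sum_distrib_left)
  also have "\<dots> \<le> (\<Sum>k<N. m ^ k)" using assms by (intro mult_left_le_one_le) (auto intro: sum_nonneg)
  finally have "(\<Sum>k<N. m ^ Suc k) \<le> 1 / (1 - m)" using g[of N] by linarith
  thus ?thesis unfolding eq sum.distrib using g[of N] by simp
qed

lemma weight_sum:
  fixes m :: real
  assumes "0 \<le> m" "m < 1"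
  shows "(\<Sum>w\<in>PiE {-int N..<int N} (\<lambda>_. UNIV). \<Prod>i\<in>{-int N..<int N}. m ^ ee i (w i)) \<le> exp (2 / (1 - m))"
proof -
  have "(\<Sum>w\<in>PiE {-int N..<int N} (\<lambda>_. UNIV). \<Prod>i\<in>{-int N..<int N}. m ^ ee i (w i))
      = (\<Prod>i\<in>{-int N..<int N}. \<Sum>b\<in>UNIV. m ^ ee i b)"
    by (rule prod_sum_PiE[symmetric]) auto
  also have "\<dots> = (\<Prod>i\<in>{-int N..<int N}. 1 + m ^ nat \<bar>i\<bar>)"
    by (rule prod.cong) (auto simp: UNIV_bool ee_def)
  also have "\<dots> \<le> (\<Prod>i\<in>{-int N..<int N}. exp (m ^ nat \<bar>i\<bar>))"
    by (rule prod_mono) (use assms in \<open>auto simp: add.commute exp_ge_add_one_self\<close>)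
  also have "\<dots> = exp (\<Sum>i\<in>{-int N..<int N}. m ^ nat \<bar>i\<bar>)" by (simp add: exp_sum)
  also have "\<dots> \<le> exp (2 / (1 - m))" using geo_sym[OF assms] by simp
  finally show ?thesis .
qed



lemma measure_bound:
  fixes p s r' :: real
  assumes p: "0 < p" "p < 1/2" and r': "1 < r'" "r' * (p / (1 - p)) < 1"
  shows "measure (mu p) ({x. D x > s} \<inter> U0) \<le> r' powr (-s) * exp (2 / (1 - r' * (p / (1 - p))))"
proof -
  define q where "q = p / (1 - p)"
  define m where "m = r' * q"
  define K where "K = r' powr (-s) * exp (2 / (1 - m))"
  have q0: "0 < q" using p by (simp add: q_def)
  have m01: "0 \<le> m" "m < 1" using r' q0 unfolding m_def q_def[symmetric] by auto
  define M where "M = (\<lambda>i::int. measure_pmf (bernoulli_pmf (occ_prob p i)))"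
  have mu_eq: "mu p = PiM UNIV M" by (simp add: mu_def M_def)
  have spM: "space (M i) = UNIV" for i by (simp add: M_def)
  have setsM: "sets (M i) = UNIV" for i by (simp add: M_def)
  have space: "space (PiM UNIV M) = UNIV" by (simp add: space_PiM spM)
  have probM: "prob_space (M i)" for i by (simp add: M_def prob_space_measure_pmf)
  define J where "J N = {-int N..<int N}" for N
  define Good where "Good N = {x. (\<forall>i. i < -int N \<longrightarrow> x i) \<and> (\<forall>i. int N \<le> i \<longrightarrow> \<not> x i) \<and> x \<in> U0 \<and> D x > s}" for N
  define F where "F N = (\<lambda>x. restrict x (J N)) ` Good N" for N
  define PC where "PC N w = prod_emb UNIV M (J N) (PiE (J N) (\<lambda>i. {w i}))" for N w
  have finJ: "finite (J N)" for N by (simp add: J_def)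
  have FPi: "F N \<subseteq> PiE (J N) (\<lambda>_. UNIV)" for N by (auto simp: F_def)
  have finF: "finite (F N)" for N
    by (rule finite_subset[OF FPi]) (simp add: finite_PiE finJ)
  have PC_sets: "PC N w \<in> sets (PiM UNIV M)" for N w
    unfolding PC_def by (intro measurable_prod_emb sets_PiM_I_finite) (auto simp: finJ setsM)
  have PC_meas: "emeasure (PiM UNIV M) (PC N w) = ennreal (\<Prod>i\<in>J N. pmf (bernoulli_pmf (occ_prob p i)) (w i))" for N w
  proof -
    have "emeasure (PiM UNIV M) (PC N w) = (\<Prod>i\<in>J N. emeasure (M i) {w i})"
      unfolding PC_def by (rule emeasure_PiM_emb) (auto simp: probM finJ setsM)
    also have "\<dots> = (\<Prod>i\<in>J N. ennreal (pmf (bernoulli_pmf (occ_prob p i)) (w i)))"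
      by (simp add: M_def emeasure_pmf_single)
    also have "\<dots> = ennreal (\<Prod>i\<in>J N. pmf (bernoulli_pmf (occ_prob p i)) (w i))"
      by (rule prod_ennreal) simp
    finally show ?thesis .
  qed
  have Good_sub: "Good N \<subseteq> (\<Union>w\<in>F N. PC N w)" for N
  proof
    fix x assume x: "x \<in> Good N"
    have "restrict x (J N) \<in> F N" using x by (auto simp: F_def)
    moreover have "x \<in> PC N (restrict x (J N))"
      by (auto simp: PC_def prod_emb_iff spM)
    ultimately show "x \<in> (\<Union>w\<in>F N. PC N w)" by blast
  qed
  have F_sets: "F N \<in> sets (PiM (J N) M)" for N
  proof -
    have sing: "PiE (J N) (\<lambda>i. {w i}) = {w}" if "w \<in> PiE (J N) (\<lambda>_. UNIV)" for w
      using that by (auto simp: PiE_iff extensional_def fun_eq_iff) (metis)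
    have "F N = (\<Union>w\<in>F N. PiE (J N) (\<lambda>i. {w i}))"
    proof -
      have "(\<Union>w\<in>F N. PiE (J N) (\<lambda>i. {w i})) = (\<Union>w\<in>F N. {w})"
        by (rule SUP_cong[OF refl], rule sing) (use FPi[of N] in blast)
      thus ?thesis by simp
    qed
    moreover have "(\<Union>w\<in>F N. PiE (J N) (\<lambda>i. {w i})) \<in> sets (PiM (J N) M)"
      by (intro sets.finite_UN finF sets_PiM_I_finite) (auto simp: finJ setsM)
    ultimately show ?thesis by simp
  qed
  have Good_sets: "Good N \<in> sets (PiM UNIV M)" for N
  proof -
    have A: "{x \<in> space (PiM UNIV M). \<forall>i. (i < -int N \<or> int N \<le> i) \<longrightarrow> x i = O_config i} \<in> sets (PiM UNIV M)"
    proof (rule sets.sets_Collect_countable_All)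
      fix i :: int
      show "{x \<in> space (PiM UNIV M). (i < -int N \<or> int N \<le> i) \<longrightarrow> x i = O_config i} \<in> sets (PiM UNIV M)"
      proof (cases "i < -int N \<or> int N \<le> i")
        case True
        have "(\<lambda>x. x i) -` {O_config i} \<inter> space (PiM UNIV M) \<in> sets (PiM UNIV M)"
          by (rule measurable_sets[OF measurable_component_singleton]) (auto simp: setsM)
        moreover have "{x \<in> space (PiM UNIV M). (i < -int N \<or> int N \<le> i) \<longrightarrow> x i = O_config i}
           = (\<lambda>x. x i) -` {O_config i} \<inter> space (PiM UNIV M)" using True by auto
        ultimately show ?thesis by simp
      next
        case False thus ?thesis by simp
      qed
    qed
    have B: "prod_emb UNIV M (J N) (F N) \<in> sets (PiM UNIV M)"
      by (rule measurable_prod_emb[OF _ F_sets]) simp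
    have "Good N = {x \<in> space (PiM UNIV M). \<forall>i. (i < -int N \<or> int N \<le> i) \<longrightarrow> x i = O_config i}
                   \<inter> prod_emb UNIV M (J N) (F N)"
    proof (intro equalityI subsetI)
      fix x assume x: "x \<in> Good N"
      thus "x \<in> {x \<in> space (PiM UNIV M). \<forall>i. (i < -int N \<or> int N \<le> i) \<longrightarrow> x i = O_config i}
                   \<inter> prod_emb UNIV M (J N) (F N)"
        by (auto simp: Good_def O_config_def space prod_emb_iff F_def spM)
    next
      fix x assume x: "x \<in> {x \<in> space (PiM UNIV M). \<forall>i. (i < -int N \<or> int N \<le> i) \<longrightarrow> x i = O_config i}
                   \<inter> prod_emb UNIV M (J N) (F N)"
      then obtain z where z: "z \<in> Good N" "restrict x (J N) = restrict z (J N)"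
        by (auto simp: prod_emb_iff F_def)
      have "x = z"
      proof
        fix i
        show "x i = z i"
        proof (cases "i \<in> J N")
          case True thus ?thesis using z(2) by (metis restrict_apply')
        next
          case False thus ?thesis using x z(1) by (auto simp: J_def Good_def O_config_def)
        qed
      qed
      thus "x \<in> Good N" using z by simp
    qed
    thus ?thesis using A B by simp
  qed
  have Kpos: "0 \<le> K" by (simp add: K_def)
  have sum_bound: "(\<Sum>w\<in>F N. \<Prod>i\<in>J N. pmf (bernoulli_pmf (occ_prob p i)) (w i)) \<le> K" for N
  proof -
    define E where "E w = (\<Sum>i\<in>J N. ee i (w i))" for w
    have Es: "real (E w) > s" if "w \<in> F N" for w
    proof -
      obtain x where x: "x \<in> Good N" "w = restrict x (J N)" using \<open>w \<in> F N\<close> by (auto simp: F_def)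
      have "E w = (\<Sum>i\<in>J N. ee i (x i))" unfolding E_def x(2) by (rule sum.cong) auto
      moreover have "D x = real (\<Sum>i\<in>J N. ee i (x i))"
        unfolding J_def by (rule D_window) (use x(1) in \<open>auto simp: Good_def U0_def\<close>)
      ultimately show ?thesis using x(1) by (simp add: Good_def)
    qed
    have "(\<Sum>w\<in>F N. \<Prod>i\<in>J N. pmf (bernoulli_pmf (occ_prob p i)) (w i)) \<le> (\<Sum>w\<in>F N. \<Prod>i\<in>J N. q ^ ee i (w i))"
      by (intro sum_mono prod_mono) (auto simp: q_def site_bound[OF p])
    also have "\<dots> = (\<Sum>w\<in>F N. q ^ E w)" by (simp add: E_def power_sum)
    also have "\<dots> \<le> (\<Sum>w\<in>F N. r' powr (-s) * m ^ E w)"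
    proof (rule sum_mono)
      fix w assume w: "w \<in> F N"
      have "1 \<le> r' powr (real (E w) - s)" using Es[OF w] r' by (intro ge_one_powr_ge_zero) auto
      also have "r' powr (real (E w) - s) = r' powr (-s) * r' ^ E w"
        using r' by (simp add: powr_diff powr_realpow divide_inverse powr_minus mult.commute)
      finally have "q ^ E w \<le> r' powr (-s) * r' ^ E w * q ^ E w" using q0 by simp
      thus "q ^ E w \<le> r' powr (-s) * m ^ E w" by (simp add: m_def power_mult_distrib mult.assoc)
    qed
    also have "\<dots> = r' powr (-s) * (\<Sum>w\<in>F N. \<Prod>i\<in>J N. m ^ ee i (w i))"
      by (simp add: sum_distrib_left E_def power_sum)
    also have "\<dots> \<le> r' powr (-s) * (\<Sum>w\<in>PiE (J N) (\<lambda>_. UNIV). \<Prod>i\<in>J N. m ^ ee i (w i))"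
      by (intro mult_left_mono sum_mono2 FPi) (auto simp: finJ finite_PiE m01 intro: prod_nonneg)
    also have "\<dots> \<le> K" unfolding K_def J_def by (intro mult_left_mono weight_sum m01) auto
    finally show ?thesis .
  qed
  have Good_em: "emeasure (PiM UNIV M) (Good N) \<le> ennreal K" for N
  proof -
    have "emeasure (PiM UNIV M) (Good N) \<le> emeasure (PiM UNIV M) (\<Union>w\<in>F N. PC N w)"
      by (rule emeasure_mono[OF Good_sub]) (intro sets.finite_UN finF PC_sets)
    also have "\<dots> \<le> (\<Sum>w\<in>F N. emeasure (PiM UNIV M) (PC N w))"
      by (rule emeasure_subadditive_finite) (auto simp: finF PC_sets)
    also have "\<dots> = ennreal (\<Sum>w\<in>F N. \<Prod>i\<in>J N. pmf (bernoulli_pmf (occ_prob p i)) (w i))"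
      by (simp add: PC_meas prod_nonneg)
    also have "\<dots> \<le> ennreal K" using sum_bound[of N] by (rule ennreal_leI)
    finally show ?thesis .
  qed
  have inc: "incseq Good" by (rule incseq_SucI) (auto simp: Good_def)
  have cover: "{x. D x > s} \<inter> U0 \<subseteq> (\<Union>N. Good N)"
  proof
    fix x assume x: "x \<in> {x. D x > s} \<inter> U0"
    let ?A = "{i. 0 \<le> i \<and> x i} \<union> {i. i < 0 \<and> \<not> x i}"
    have finA: "finite ?A" using x by (auto simp: U0_def)
    define N where "N = nat (Max (insert 0 (abs ` ?A))) + 1"
    have bnd: "\<bar>i\<bar> < int N" if "i \<in> ?A" for i
    proof -
      have "\<bar>i\<bar> \<le> Max (insert 0 (abs ` ?A))" using finA that by (intro Max_ge) auto
      thus ?thesis unfolding N_def by linarith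
    qed
    have l: "x i" if "i < -int N" for i
    proof (rule ccontr)
      assume "\<not> x i"
      hence "i \<in> ?A" using that by auto
      from bnd[OF this] that show False by simp
    qed
    have u: "\<not> x i" if "int N \<le> i" for i
    proof
      assume "x i"
      hence "i \<in> ?A" using that by auto
      from bnd[OF this] that show False by simp
    qed
    have "x \<in> Good N"
      unfolding Good_def using x l u by blast
    thus "x \<in> (\<Union>N. Good N)" by blast
  qed
  have "emeasure (PiM UNIV M) ({x. D x > s} \<inter> U0) \<le> emeasure (PiM UNIV M) (\<Union>N. Good N)"
    by (rule emeasure_mono[OF cover]) (auto intro: Good_sets)
  also have "\<dots> = (SUP N. emeasure (PiM UNIV M) (Good N))"
    by (rule SUP_emeasure_incseq[symmetric]) (auto simp: Good_sets inc)
  also have "\<dots> \<le> ennreal K" by (rule SUP_least) (rule Good_em)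
  finally have em: "emeasure (mu p) ({x. D x > s} \<inter> U0) \<le> ennreal K" by (simp add: mu_eq)
  have "measure (mu p) ({x. D x > s} \<inter> U0) \<le> enn2real (ennreal K)"
    unfolding measure_def by (rule enn2real_mono[OF em]) simp
  thus ?thesis using Kpos by (simp add: K_def m_def q_def)
qed



theorem lemma4p3:
  fixes p c :: real
  assumes "0 < p" "p < 1/2" "c > cp p"
  shows "(\<lambda>t::real. mu_U0 p {x. D x > c * ln t}) \<in> o[at_top](\<lambda>t. 1 / t)"
proof -
  define r where "r = (1 - p) / p"
  have r1: "r > 1" using assms by (simp add: r_def field_simps)
  have lr: "ln r > 0" using r1 by simp
  have cp_eq: "cp p = 1 / ln r" using lr by (simp add: cp_def r_def)
  have c0: "c > 0" using assms(3) lr cp_eq by (smt (verit) divide_pos_pos)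
  have clr: "c * ln r > 1" using assms(3) cp_eq lr c0 by (simp add: field_simps)
  define L where "L = (ln r + 1 / c) / 2"
  have L0: "L > 0" using lr c0 unfolding L_def by (simp add: add_pos_pos)
  have Llr: "L < ln r" using clr c0 unfolding L_def by (simp add: field_simps)
  define a where "a = c * L"
  have a1: "a > 1" using clr c0 unfolding a_def L_def by (simp add: field_simps)
  define r' where "r' = exp L"
  have r'1: "1 < r'" using L0 by (simp add: r'_def)
  have q: "p / (1 - p) = 1 / r" by (simp add: r_def)
  have r'q: "r' * (p / (1 - p)) < 1"
  proof -
    have "r' < r" using Llr r1 unfolding r'_def by (metis exp_less_cancel_iff exp_ln less_trans zero_less_one)
    thus ?thesis using r1 by (simp add: q)
  qed
  define C where "C = exp (2 / (1 - r' * (p / (1 - p))))"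
  define Z where "Z = measure (mu p) U0"
  have ev: "eventually (\<lambda>t. norm (mu_U0 p {x. D x > c * ln t}) \<le> (if Z = 0 then 0 else C / Z) * norm (t powr (-a))) at_top"
    using eventually_gt_at_top[of 0]
  proof eventually_elim
    case (elim t)
    have mb: "measure (mu p) ({x. D x > c * ln t} \<inter> U0) \<le> r' powr (- (c * ln t)) * C"
      unfolding C_def by (rule measure_bound[OF assms(1,2) r'1 r'q])
    have "r' powr (- (c * ln t)) = t powr (-a)"
      using elim by (simp add: r'_def powr_def a_def)
    hence mb': "measure (mu p) ({x. D x > c * ln t} \<inter> U0) \<le> C * t powr (-a)" using mb by (simp add: mult.commute)
    show ?case
    proof (cases "Z = 0")
      case True thus ?thesis by (simp add: mu_U0_def Z_def)
    next
      case False
      have Zpos: "Z > 0" using False by (simp add: Z_def order.not_eq_order_implies_strict)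
      have "norm (mu_U0 p {x. D x > c * ln t}) = measure (mu p) ({x. D x > c * ln t} \<inter> U0) / Z"
        by (simp add: mu_U0_def Z_def)
      also have "\<dots> \<le> C * t powr (-a) / Z" using mb' Zpos by (simp add: divide_right_mono)
      finally show ?thesis using False by simp
    qed
  qed
  have O1: "(\<lambda>t::real. mu_U0 p {x. D x > c * ln t}) \<in> O[at_top](\<lambda>t. t powr (-a))"
    by (rule bigoI[OF ev])
  have o2: "(\<lambda>t::real. t powr (-a)) \<in> o[at_top](\<lambda>t. t powr (-1))"
    using powr_smallo_iff[of "\<lambda>t. t" at_top "-a" "-1"] a1 by (simp add: filterlim_ident)
  have O3: "(\<lambda>t::real. t powr (-1)) \<in> O[at_top](\<lambda>t. 1 / t)"
    by (rule bigoI[where c=1]) (use eventually_gt_at_top[of 0] in \<open>eventually_elim, simp add: powr_minus_divide\<close>)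
  show ?thesis
    by (rule landau_o.big_small_trans[OF O1 landau_o.small_big_trans[OF o2 O3]])
qed

end
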